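(* Fix $\alpha\in(0,1/2]$ and let $a,n$ be positive integers with $n\ge \max\{1000(\log(a)+1)/\alpha,\ a+1\}$ (natural logarithm). Then there is a bipartite graph $G$ with parts $A$ and $B$, $|A|=a$, $|B|=n$, such that: (a) every $x\in A$ has degree exactly $\lfloor \alpha n\rfloor$; (b) for every $\delta\in(0,1]$ with $\delta\ge 10a^{-1/3}\alpha^{-1}$, and every subgraph $H$ of $G$ with at least $\alpha\delta a n$ edges, there exist $A'\subseteq A$ and $B'\subseteq B$ with $|A'|\le 1/\alpha$ and $|B'|\ge \delta n/16$ such that the induced subgraph $H[A'\cup B']$ has diameter at most $6$.
   Context: All graphs are finite and simple. The diameter of a graph is the maximum distance between two of its vertices (in particular the graph is connected). *)

theory Defs
  imports Complex_Main
begin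

text \<open>A bipartite graph with parts A and B is represented by its edge set
  E \<subseteq> A \<times> B (type nat \<times> nat); its vertex set is the disjoint union of A and B,
  encoded as Inl ` A \<union> Inr ` B.\<close>

definition badj :: "(nat \<times> nat) set \<Rightarrow> nat + nat \<Rightarrow> nat + nat \<Rightarrow> bool" where
  "badj F u v \<longleftrightarrow> (\<exists>x y. (x, y) \<in> F \<and>
      ((u = Inl x \<and> v = Inr y) \<or> (u = Inr y \<and> v = Inl x)))"

text \<open>There is a walk of length at most k from u to v all of whose vertices lie in S
  (i.e. distance at most k in the subgraph induced on S).\<close>

definition dist_le_in :: "(nat \<times> nat) set \<Rightarrow> (nat + nat) set \<Rightarrow> nat \<Rightarrow> nat + nat \<Rightarrow> nat + nat \<Rightarrow> bool" where
  "dist_le_in F S k u v \<longleftrightarrow> (\<exists>p. p \<noteq> [] \<and> length p \<le> k + 1 \<and> hd p = u \<and> last p = v \<and>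
      set p \<subseteq> S \<and> (\<forall>i. i + 1 < length p \<longrightarrow> badj F (p ! i) (p ! (i + 1))))"

definition induced_diam_le :: "(nat \<times> nat) set \<Rightarrow> nat set \<Rightarrow> nat set \<Rightarrow> nat \<Rightarrow> bool" where
  "induced_diam_le F A' B' k \<longleftrightarrow>
     (let S = Inl ` A' \<union> Inr ` B' in S \<noteq> {} \<and> (\<forall>u\<in>S. \<forall>v\<in>S. dist_le_in F S k u v))"

end

theory Submission
  imports Defs "HOL-Library.FuncSet"
begin

lemma choose_fact_le: "real (u choose k) * fact k \<le> real u ^ k"
proof (cases "k \<le> u")
  case True
  have "real (u choose k) * fact k = fact u / fact (u - k)"
    using binomial_fact[OF True] by (simp add: field_simps)
  also have "\<dots> = real (fact u div fact (u - k))"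
    by (simp add: fact_dvd real_of_nat_div)
  also have "\<dots> \<le> real (u ^ k)" using fact_div_fact_le_pow[OF True] by linarith
  finally show ?thesis by simp
next
  case False then show ?thesis by (simp add: binomial_eq_0)
qed

lemma pow_le_exp_fact: "real k ^ k \<le> exp (real k) * fact k"
proof -
  have c: "(\<lambda>n. real k ^ n /\<^sub>R fact n) sums exp (real k)" by (rule exp_converges)
  have s: "summable (\<lambda>n. real k ^ n /\<^sub>R fact n)"
    using c sums_summable by blast
  have "(\<Sum>n\<in>{k}. real k ^ n /\<^sub>R fact n) \<le> (\<Sum>n. real k ^ n /\<^sub>R fact n)"
    by (rule sum_le_suminf[OF s]) auto
  also have "(\<Sum>n. real k ^ n /\<^sub>R fact n) = exp (real k)" using c sums_unique by metis
  finally have "real k ^ k / fact k \<le> exp (real k)" by (simp add: divide_inverse_commute)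
  thus ?thesis by (simp add: divide_le_eq)
qed

lemma nat_ineq: fixes k d n :: nat assumes "k \<le> d" "d \<le> n" shows "(d - k) * n \<le> d * (n - k)"
proof -
  have "k * d \<le> k * n" using assms by (simp add: mult_le_mono2)
  hence "d * n - k * n \<le> d * n - d * k" by (metis diff_le_mono2 mult.commute)
  moreover have "(d - k) * n = d * n - k * n" by (rule diff_mult_distrib)
  moreover have "d * (n - k) = d * n - d * k" by (rule diff_mult_distrib2)
  ultimately show ?thesis by simp
qed

lemma binom_step_nat:
  assumes "k < d" "d \<le> n"
  shows "((n - Suc k) choose (d - Suc k)) * n \<le> ((n - k) choose (d - k)) * d"
proof -
  have pos: "0 < d - k" using assms by simp
  have eq0: "(d - k) * ((n - k) choose (d - k)) = (n - k) * ((n - k - 1) choose (d - k - 1))"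
    by (rule times_binomial_minus1_eq[OF pos])
  have e1: "n - k - 1 = n - Suc k" "d - k - 1 = d - Suc k" by simp_all
  have eq: "(d - k) * ((n - k) choose (d - k)) = (n - k) * ((n - Suc k) choose (d - Suc k))"
    using eq0 unfolding e1 .
  have ineq: "(d - k) * n \<le> d * (n - k)" using nat_ineq assms by simp
  have "(n - k) * (((n - Suc k) choose (d - Suc k)) * n) = ((n - k) * ((n - Suc k) choose (d - Suc k))) * n"
    by (simp only: mult.assoc)
  also have "\<dots> = ((d - k) * ((n - k) choose (d - k))) * n" by (simp only: eq)
  also have "\<dots> = ((d - k) * n) * ((n - k) choose (d - k))" by (simp only: mult_ac)
  also have "\<dots> \<le> (d * (n - k)) * ((n - k) choose (d - k))" using ineq by (rule mult_right_mono) simp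
  also have "\<dots> = (n - k) * (((n - k) choose (d - k)) * d)" by (simp only: mult_ac)
  finally have "(n - k) * (((n - Suc k) choose (d - Suc k)) * n) \<le> (n - k) * (((n - k) choose (d - k)) * d)" .
  moreover have "0 < n - k" using assms by simp
  ultimately show ?thesis by simp
qed

lemma binom_ratio:
  assumes "k \<le> d" "d \<le> n"
  shows "real ((n - k) choose (d - k)) * real n ^ k \<le> real d ^ k * real (n choose d)"
  using assms
proof (induction k)
  case 0 then show ?case by simp
next
  case (Suc k)
  have IH: "real ((n - k) choose (d - k)) * real n ^ k \<le> real d ^ k * real (n choose d)"
    using Suc by simp
  have st0: "((n - Suc k) choose (d - Suc k)) * n \<le> ((n - k) choose (d - k)) * d"
    using binom_step_nat Suc.prems by simp
  have st: "real ((n - Suc k) choose (d - Suc k)) * real n \<le> real ((n - k) choose (d - k)) * real d"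
    using st0 by (metis of_nat_le_iff of_nat_mult)
  have "real ((n - Suc k) choose (d - Suc k)) * real n ^ Suc k
      = (real ((n - Suc k) choose (d - Suc k)) * real n) * real n ^ k" by (simp add: mult.assoc)
  also have "\<dots> \<le> (real ((n - k) choose (d - k)) * real d) * real n ^ k"
    using st by (rule mult_right_mono) simp
  also have "\<dots> = (real ((n - k) choose (d - k)) * real n ^ k) * real d" by (simp only: mult_ac)
  also have "\<dots> \<le> (real d ^ k * real (n choose d)) * real d"
    using IH by (rule mult_right_mono) simp
  also have "\<dots> = real d ^ Suc k * real (n choose d)" by (simp only: power_Suc mult_ac)
  finally show ?case .
qed


lemma card_G:
  assumes "K \<subseteq> {..<n}" "card K = k"
  shows "card {S. S \<subseteq> {..<n} \<and> card S = d \<and> K \<subseteq> S} \<le> (n - k) choose (d - k)"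
proof -
  have fK: "finite K" using assms(1) finite_subset by blast
  have "{S. S \<subseteq> {..<n} \<and> card S = d \<and> K \<subseteq> S} \<subseteq> (\<lambda>T. T \<union> K) ` {T. T \<subseteq> {..<n} - K \<and> card T = d - k}"
  proof
    fix S assume S: "S \<in> {S. S \<subseteq> {..<n} \<and> card S = d \<and> K \<subseteq> S}"
    have "finite S" using S finite_subset by blast
    then have "card (S - K) = d - k" using S assms card_Diff_subset[OF fK] by auto
    moreover have "S = (S - K) \<union> K" using S by auto
    ultimately show "S \<in> (\<lambda>T. T \<union> K) ` {T. T \<subseteq> {..<n} - K \<and> card T = d - k}"
      using S by blast
  qed
  hence "card {S. S \<subseteq> {..<n} \<and> card S = d \<and> K \<subseteq> S} \<le> card ((\<lambda>T. T \<union> K) ` {T. T \<subseteq> {..<n} - K \<and> card T = d - k})"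
    by (intro card_mono) (auto intro!: finite_imageI)
  also have "\<dots> \<le> card {T. T \<subseteq> {..<n} - K \<and> card T = d - k}" by (rule card_image_le) auto
  also have "\<dots> = card ({..<n} - K) choose (d - k)" by (rule n_subsets) auto
  also have "card ({..<n} - K) = n - k" using assms fK by (simp add: card_Diff_subset)
  finally show ?thesis .
qed

lemma card_DU:
  assumes "U \<subseteq> {..<n}"
  shows "card {S. S \<subseteq> {..<n} \<and> card S = d \<and> k \<le> card (S \<inter> U)} \<le> (card U choose k) * ((n - k) choose (d - k))"
proof -
  let ?Ks = "{K. K \<subseteq> U \<and> card K = k}"
  let ?G = "\<lambda>K. {S. S \<subseteq> {..<n} \<and> card S = d \<and> K \<subseteq> S}"
  have fU: "finite U" using assms finite_subset by blast
  have fKs: "finite ?Ks" by (rule finite_subset[of _ "Pow U"]) (auto simp: fU)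
  have sub: "{S. S \<subseteq> {..<n} \<and> card S = d \<and> k \<le> card (S \<inter> U)} \<subseteq> (\<Union>K\<in>?Ks. ?G K)"
  proof
    fix S assume S: "S \<in> {S. S \<subseteq> {..<n} \<and> card S = d \<and> k \<le> card (S \<inter> U)}"
    hence "k \<le> card (S \<inter> U)" by simp
    then obtain K where K: "K \<subseteq> S \<inter> U" "card K = k"
      using obtain_subset_with_card_n by metis
    have "K \<in> ?Ks" using K by simp
    moreover have "S \<in> ?G K" using S K by simp
    ultimately show "S \<in> (\<Union>K\<in>?Ks. ?G K)" by blast
  qed
  have fG: "finite (\<Union>K\<in>?Ks. ?G K)"
    by (rule finite_subset[of _ "Pow {..<n}"]) auto
  have "card {S. S \<subseteq> {..<n} \<and> card S = d \<and> k \<le> card (S \<inter> U)} \<le> card (\<Union>K\<in>?Ks. ?G K)"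
    by (rule card_mono[OF fG sub])
  also have "\<dots> \<le> (\<Sum>K\<in>?Ks. card (?G K))" by (rule card_UN_le[OF fKs])
  also have "\<dots> \<le> (\<Sum>K\<in>?Ks. (n - k) choose (d - k))"
  proof (rule sum_mono)
    fix K assume "K \<in> ?Ks"
    hence "K \<subseteq> {..<n}" "card K = k" using assms by auto
    thus "card (?G K) \<le> (n - k) choose (d - k)" by (rule card_G)
  qed
  also have "\<dots> = card ?Ks * ((n - k) choose (d - k))" by simp
  also have "card ?Ks = card U choose k" by (rule n_subsets[OF fU])
  finally show ?thesis .
qed

lemma DU_bound:
  assumes U: "U \<subseteq> {..<n}" and dn: "d \<le> n" and k0: "0 < k"
    and cond: "4 * real (card U) * real d \<le> real k * real n"
  shows "real (card {S. S \<subseteq> {..<n} \<and> card S = d \<and> k \<le> card (S \<inter> U)}) \<le> (3/4)^k * real (n choose d)"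
proof (cases "k \<le> d")
  case False
  have e: "{S. S \<subseteq> {..<n} \<and> card S = d \<and> k \<le> card (S \<inter> U)} = {}"
  proof (rule ccontr)
    assume "\<not> ?thesis"
    then obtain S where S: "S \<subseteq> {..<n}" "card S = d" "k \<le> card (S \<inter> U)" by auto
    have "finite S" using S finite_subset by blast
    hence "card (S \<inter> U) \<le> card S" by (simp add: card_mono)
    thus False using S False by simp
  qed
  show ?thesis unfolding e by simp
next
  case True
  have n0: "0 < n" using True k0 dn by simp
  define u where "u = real (card U)"
  define C where "C = real (n choose d)"
  define r where "r = u * real d / real n"
  have u0: "0 \<le> u" "0 \<le> C" unfolding u_def C_def by simp_all
  have fk: "(0::real) < fact k" by simp
  have c1: "real (card U choose k) \<le> u ^ k / fact k"
    using choose_fact_le[of "card U" k] fk unfolding u_def by (simp add: pos_le_divide_eq)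
  have np: "0 < real n ^ k" using n0 by simp
  have c2: "real ((n - k) choose (d - k)) \<le> real d ^ k * C / real n ^ k"
    using binom_ratio[OF True dn] np unfolding C_def by (simp add: pos_le_divide_eq)
  have r0: "0 \<le> r" unfolding r_def u_def by simp
  have rk: "r \<le> real k / 4" using cond n0 unfolding r_def u_def by (simp add: divide_le_eq)
  have X: "real (card {S. S \<subseteq> {..<n} \<and> card S = d \<and> k \<le> card (S \<inter> U)})
      \<le> real ((card U choose k) * ((n - k) choose (d - k)))"
    using card_DU[OF U, of d k] by (rule of_nat_mono)
  also have "\<dots> = real (card U choose k) * real ((n - k) choose (d - k))" by simp
  also have "\<dots> \<le> (u ^ k / fact k) * (real d ^ k * C / real n ^ k)"
    using c1 c2 by (intro mult_mono) auto
  also have "\<dots> = (r ^ k / fact k) * C"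
  proof -
    have "r ^ k = u ^ k * real d ^ k / real n ^ k" unfolding r_def by (simp add: power_divide power_mult_distrib)
    thus ?thesis by (simp add: mult_ac)
  qed
  also have "\<dots> \<le> ((real k / 4) ^ k / fact k) * C"
  proof -
    have "r ^ k \<le> (real k / 4) ^ k" using rk r0 by (rule power_mono)
    hence "r ^ k / fact k \<le> (real k / 4) ^ k / fact k" using fk by (rule divide_right_mono[OF _ less_imp_le])
    thus ?thesis using u0(2) by (rule mult_right_mono)
  qed
  also have "(real k / 4) ^ k / fact k = (real k ^ k / fact k) / 4 ^ k"
    by (simp add: power_divide)
  also have "(real k ^ k / fact k) / 4 ^ k \<le> (exp 1 ^ k) / 4 ^ k"
  proof -
    have "real k ^ k / fact k \<le> exp (real k)"
      using pow_le_exp_fact[of k] fk by (simp add: divide_le_eq)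
    also have "exp (real k) = exp 1 ^ k" by (simp add: exp_of_nat_mult[symmetric])
    finally show ?thesis by (rule divide_right_mono) simp
  qed
  also have "exp 1 ^ k / 4 ^ k \<le> (3::real) ^ k / 4 ^ k"
    using exp_le by (intro divide_right_mono power_mono) auto
  also have "(3::real) ^ k / 4 ^ k = (3/4) ^ k" by (simp add: power_divide)
  finally show ?thesis using u0 unfolding C_def by (simp add: mult_right_mono)
qed

lemma piece_card:
  assumes M: "M \<subseteq> {..<a}" "card M = m" and DU: "real (card DU) \<le> r * real (card D)"
  shows "real (card (PiE {..<a} (\<lambda>x. if x \<in> M then DU else D))) \<le> (r ^ m) * real (card D) ^ a"
proof -
  have "card (PiE {..<a} (\<lambda>x. if x \<in> M then DU else D)) = (\<Prod>x\<in>{..<a}. card (if x \<in> M then DU else D))"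
    by (rule card_PiE) simp
  also have "\<dots> = (\<Prod>x\<in>{..<a}. if x \<in> M then card DU else card D)"
    by (intro prod.cong) auto
  also have "\<dots> = card DU ^ card ({..<a} \<inter> M) * card D ^ card ({..<a} - M)"
    by (simp add: prod.If_cases Diff_eq)
  also have "{..<a} \<inter> M = M" using M by auto
  also have "card ({..<a} - M) = a - m" using M by (simp add: card_Diff_subset finite_subset)
  finally have eq: "real (card (PiE {..<a} (\<lambda>x. if x \<in> M then DU else D))) = real (card DU) ^ m * real (card D) ^ (a - m)"
    using M by simp
  have "real (card DU) ^ m \<le> (r * real (card D)) ^ m" by (intro power_mono DU) simp
  hence "real (card DU) ^ m * real (card D) ^ (a - m) \<le> (r * real (card D)) ^ m * real (card D) ^ (a - m)"
    by (intro mult_right_mono) auto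
  also have "\<dots> = r ^ m * real (card D) ^ (m + (a - m))" by (simp add: power_mult_distrib power_add)
  also have "m + (a - m) = a"
  proof -
    have "m \<le> a" using M card_mono[of "{..<a}" M] by auto
    thus ?thesis by simp
  qed
  finally show ?thesis using eq by simp
qed

lemma bad_count:
  fixes a n d k m u :: nat
  defines "D \<equiv> {S. S \<subseteq> {..<n} \<and> card S = d}"
  assumes dn: "d \<le> n" and k0: "0 < k" and ma: "m \<le> a"
    and cond: "\<And>U. U \<subseteq> {..<n} \<Longrightarrow> card U \<le> u \<Longrightarrow> 4 * real (card U) * real d \<le> real k * real n"
  shows "real (card {f\<in>PiE {..<a} (\<lambda>_. D). \<exists>U\<subseteq>{..<n}. card U \<le> u \<and> m \<le> card {x\<in>{..<a}. k \<le> card (f x \<inter> U)}})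
     \<le> 2 ^ n * 2 ^ a * (3/4) ^ (k * m) * real (card (PiE {..<a} (\<lambda>_. D)))"
proof -
  let ?Us = "{U. U \<subseteq> {..<n} \<and> card U \<le> u}"
  let ?Ms = "{M. M \<subseteq> {..<a} \<and> card M = m}"
  let ?DU = "\<lambda>U. {S. S \<subseteq> {..<n} \<and> card S = d \<and> k \<le> card (S \<inter> U)}"
  let ?P = "\<lambda>U M. PiE {..<a} (\<lambda>x. if x \<in> M then ?DU U else D)"
  have cD: "card D = n choose d" unfolding D_def using n_subsets[of "{..<n}" d] by simp
  have cO: "card (PiE {..<a} (\<lambda>_. D)) = card D ^ a" by (simp add: card_PiE)
  have fUs: "finite ?Us" by (rule finite_subset[of _ "Pow {..<n}"]) auto
  have fMs: "finite ?Ms" by (rule finite_subset[of _ "Pow {..<a}"]) auto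
  have sub: "{f\<in>PiE {..<a} (\<lambda>_. D). \<exists>U\<subseteq>{..<n}. card U \<le> u \<and> m \<le> card {x\<in>{..<a}. k \<le> card (f x \<inter> U)}}
      \<subseteq> (\<Union>U\<in>?Us. \<Union>M\<in>?Ms. ?P U M)"
  proof
    fix f assume f: "f \<in> {f\<in>PiE {..<a} (\<lambda>_. D). \<exists>U\<subseteq>{..<n}. card U \<le> u \<and> m \<le> card {x\<in>{..<a}. k \<le> card (f x \<inter> U)}}"
    then obtain U where U: "U \<subseteq> {..<n}" "card U \<le> u" "m \<le> card {x\<in>{..<a}. k \<le> card (f x \<inter> U)}" by blast
    obtain M where M: "M \<subseteq> {x\<in>{..<a}. k \<le> card (f x \<inter> U)}" "card M = m"
      using obtain_subset_with_card_n[OF U(3)] by blast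
    have "f \<in> ?P U M" using f M unfolding D_def by (auto simp: PiE_iff)
    moreover have "U \<in> ?Us" "M \<in> ?Ms" using U M by auto
    ultimately show "f \<in> (\<Union>U\<in>?Us. \<Union>M\<in>?Ms. ?P U M)" by blast
  qed
  have fP: "finite (\<Union>U\<in>?Us. \<Union>M\<in>?Ms. ?P U M)"
    using fUs fMs by (auto intro!: finite_PiE simp: D_def)
  have "card {f\<in>PiE {..<a} (\<lambda>_. D). \<exists>U\<subseteq>{..<n}. card U \<le> u \<and> m \<le> card {x\<in>{..<a}. k \<le> card (f x \<inter> U)}}
      \<le> card (\<Union>U\<in>?Us. \<Union>M\<in>?Ms. ?P U M)" by (rule card_mono[OF fP sub])
  also have "\<dots> \<le> (\<Sum>U\<in>?Us. card (\<Union>M\<in>?Ms. ?P U M))" by (rule card_UN_le[OF fUs])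
  also have "\<dots> \<le> (\<Sum>U\<in>?Us. \<Sum>M\<in>?Ms. card (?P U M))" by (intro sum_mono card_UN_le[OF fMs])
  finally have c0: "card {f\<in>PiE {..<a} (\<lambda>_. D). \<exists>U\<subseteq>{..<n}. card U \<le> u \<and> m \<le> card {x\<in>{..<a}. k \<le> card (f x \<inter> U)}}
      \<le> (\<Sum>U\<in>?Us. \<Sum>M\<in>?Ms. card (?P U M))" .
  have c1: "real (card {f\<in>PiE {..<a} (\<lambda>_. D). \<exists>U\<subseteq>{..<n}. card U \<le> u \<and> m \<le> card {x\<in>{..<a}. k \<le> card (f x \<inter> U)}})
      \<le> (\<Sum>U\<in>?Us. \<Sum>M\<in>?Ms. real (card (?P U M)))" using of_nat_mono[OF c0] by simp
  have pb: "real (card (?P U M)) \<le> (3/4) ^ (k * m) * real (card D) ^ a" if "U \<in> ?Us" "M \<in> ?Ms" for U M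
  proof -
    have "real (card (?DU U)) \<le> (3/4)^k * real (card D)"
      using DU_bound[of U n d k] that dn k0 cond[of U] cD by auto
    from piece_card[of M a m "?DU U" "(3/4)^k" D, OF _ _ this] that
    show ?thesis by (simp add: power_mult)
  qed
  have "(\<Sum>U\<in>?Us. \<Sum>M\<in>?Ms. real (card (?P U M))) \<le> (\<Sum>U\<in>?Us. \<Sum>M\<in>?Ms. (3/4) ^ (k * m) * real (card D) ^ a)"
    by (intro sum_mono pb) auto
  also have "\<dots> = real (card ?Us) * real (card ?Ms) * ((3/4) ^ (k * m) * real (card D) ^ a)" by simp
  also have "\<dots> \<le> 2 ^ n * 2 ^ a * ((3/4) ^ (k * m) * real (card D) ^ a)"
  proof -
    have "card ?Us \<le> card (Pow {..<n})" by (intro card_mono) auto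
    hence "card ?Us \<le> 2 ^ n" by (simp add: card_Pow)
    hence a1: "real (card ?Us) \<le> 2 ^ n" using of_nat_mono by fastforce
    have "card ?Ms = a choose m" using n_subsets[of "{..<a}" m] by simp
    hence "card ?Ms \<le> 2 ^ a" using binomial_le_pow2[of a m] by simp
    hence a2: "real (card ?Ms) \<le> 2 ^ a" using of_nat_mono by fastforce
    show ?thesis by (intro mult_right_mono mult_mono a1 a2) auto
  qed
  finally show ?thesis using c1 cO by simp
qed

lemma km_bound:
  fixes \<alpha> \<delta> :: real and a n :: nat
  assumes "0 < \<alpha>" "0 < \<delta>" "0 < a" "0 < n" "10 * real a powr (-1/3) / \<alpha> \<le> \<delta>"
  shows "8 * real n \<le> real (nat \<lceil>\<alpha> * \<delta> * real n / 4\<rceil> * nat \<lceil>\<alpha> * \<delta> * real a / 2\<rceil>)"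
proof -
  have ad: "10 * real a powr (-1/3) \<le> \<alpha> * \<delta>" using assms by (simp add: field_simps)
  have p: "0 < real a powr (-1/3)" using assms by simp
  have e0: "(real a powr (-1/3))^2 * real a = real a powr (1/3)"
  proof -
    have "(real a powr (-1/3))^2 * real a = real a powr (-1/3) * real a powr (-1/3) * real a powr 1"
      using assms by (simp add: power2_eq_square)
    also have "\<dots> = real a powr (-1/3 + -1/3 + 1)" by (simp only: powr_add)
    also have "(-1/3 + -1/3 + 1) = (1/3::real)" by simp
    finally show ?thesis .
  qed
  have "(10 * real a powr (-1/3))^2 * real a = 100 * ((real a powr (-1/3))^2 * real a)"
    by (simp add: power_mult_distrib)
  hence e1: "(10 * real a powr (-1/3))^2 * real a = 100 * real a powr (1/3)" by (simp only: e0)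
  have "1 \<le> real a powr (1/3)" using assms by (simp add: ge_one_powr_ge_zero)
  hence "100 \<le> (10 * real a powr (-1/3))^2 * real a" using e1 by simp
  also have "\<dots> \<le> (\<alpha> * \<delta>)^2 * real a" using ad p by (intro mult_right_mono power_mono) auto
  finally have h: "100 \<le> (\<alpha> * \<delta>)^2 * real a" .
  have pos: "0 \<le> \<alpha> * \<delta> * real n / 4" using assms by simp
  have pos2: "0 \<le> \<alpha> * \<delta> * real a / 2" using assms by simp
  have k: "\<alpha> * \<delta> * real n / 4 \<le> real (nat \<lceil>\<alpha> * \<delta> * real n / 4\<rceil>)" by linarith
  have m: "\<alpha> * \<delta> * real a / 2 \<le> real (nat \<lceil>\<alpha> * \<delta> * real a / 2\<rceil>)" by linarith
  have "8 * real n \<le> (\<alpha> * \<delta> * real n / 4) * (\<alpha> * \<delta> * real a / 2)"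
  proof -
    have "8 * real n * 8 \<le> 100 * real n" by simp
    also have "\<dots> \<le> (\<alpha> * \<delta>)^2 * real a * real n" using h by (intro mult_right_mono) auto
    finally show ?thesis by (simp add: power2_eq_square field_simps)
  qed
  also have "\<dots> \<le> real (nat \<lceil>\<alpha> * \<delta> * real n / 4\<rceil>) * real (nat \<lceil>\<alpha> * \<delta> * real a / 2\<rceil>)"
    using k m pos pos2 by (intro mult_mono) auto
  finally show ?thesis by simp
qed


lemma ceil_le_iff_nat: "(t::real) \<le> real c \<longleftrightarrow> nat \<lceil>t\<rceil> \<le> c"
  by (simp add: nat_le_iff ceiling_le_iff)

lemma le_floor_iff_nat: "0 \<le> (t::real) \<Longrightarrow> (c \<le> nat \<lfloor>t\<rfloor> \<longleftrightarrow> real c \<le> t)"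
  by (simp add: le_nat_iff le_floor_iff)

lemma bad_real:
  fixes \<alpha> \<delta> :: real and a n :: nat
  defines "D \<equiv> {S. S \<subseteq> {..<n} \<and> card S = nat \<lfloor>\<alpha> * real n\<rfloor>}"
  assumes al: "0 < \<alpha>" "\<alpha> \<le> 1/2" and de: "0 < \<delta>" "\<delta> \<le> 1" and an: "0 < a" "a < n"
    and dmin: "10 * real a powr (-1/3) / \<alpha> \<le> \<delta>"
  shows "real (card {f\<in>PiE {..<a} (\<lambda>_. D). \<exists>U\<subseteq>{..<n}. real (card U) \<le> \<delta> * real n / 16 \<and>
            \<alpha> * \<delta> * real a / 2 \<le> real (card {x\<in>{..<a}. \<alpha> * \<delta> * real n / 4 \<le> real (card (f x \<inter> U))})})
         * real (n + 1) < real (card (PiE {..<a} (\<lambda>_. D)))"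
proof -
  define d where "d = nat \<lfloor>\<alpha> * real n\<rfloor>"
  define u where "u = nat \<lfloor>\<delta> * real n / 16\<rfloor>"
  define k where "k = nat \<lceil>\<alpha> * \<delta> * real n / 4\<rceil>"
  define m where "m = nat \<lceil>\<alpha> * \<delta> * real a / 2\<rceil>"
  define Bad where "Bad = {f\<in>PiE {..<a} (\<lambda>_. D). \<exists>U\<subseteq>{..<n}. real (card U) \<le> \<delta> * real n / 16 \<and>
            \<alpha> * \<delta> * real a / 2 \<le> real (card {x\<in>{..<a}. \<alpha> * \<delta> * real n / 4 \<le> real (card (f x \<inter> U))})}"
  define Bad2 where "Bad2 = {f\<in>PiE {..<a} (\<lambda>_. D). \<exists>U\<subseteq>{..<n}. card U \<le> u \<and> m \<le> card {x\<in>{..<a}. k \<le> card (f x \<inter> U)}}"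
  let ?O = "PiE {..<a} (\<lambda>_. D)"
  have n0: "0 < n" using an by simp
  have an0: "0 \<le> \<alpha> * real n" using al by simp
  have dle: "real d \<le> \<alpha> * real n" unfolding d_def using an0 by simp
  have "\<alpha> * real n \<le> 1 * real n" using al by (intro mult_right_mono) auto
  hence "real d \<le> real n" using dle by simp
  hence dn: "d \<le> n" by simp
  have k0: "0 < k" unfolding k_def using al de n0 by simp
  have ad1: "\<alpha> * \<delta> \<le> 1 * 1" using al de by (intro mult_mono) auto
  have "\<alpha> * \<delta> * real a \<le> 1 * real a" using ad1 by (intro mult_right_mono) auto
  hence "\<alpha> * \<delta> * real a / 2 \<le> real a" by simp
  hence ma: "m \<le> a" unfolding m_def by (simp only: ceil_le_iff_nat)
  have cond: "4 * real (card U) * real d \<le> real k * real n" if "U \<subseteq> {..<n}" "card U \<le> u" for U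
  proof -
    have "real (card U) \<le> \<delta> * real n / 16"
      using that(2) le_floor_iff_nat[of "\<delta> * real n / 16" "card U"] de unfolding u_def by simp
    hence "4 * real (card U) * real d \<le> 4 * (\<delta> * real n / 16) * (\<alpha> * real n)"
      using dle by (intro mult_mono) auto
    also have "\<dots> = (\<alpha> * \<delta> * real n / 4) * real n" by simp
    also have "\<alpha> * \<delta> * real n / 4 \<le> real k" unfolding k_def by linarith
    finally show ?thesis by (simp add: mult_right_mono)
  qed
  note bc = bad_count[of d n k m a u, OF dn k0 ma cond]
  have sub: "Bad \<subseteq> Bad2"
    unfolding Bad_def Bad2_def
  proof (safe)
    fix f U assume f: "f \<in> ?O" and U: "U \<subseteq> {..<n}" "real (card U) \<le> \<delta> * real n / 16"
      and c: "\<alpha> * \<delta> * real a / 2 \<le> real (card {x\<in>{..<a}. \<alpha> * \<delta> * real n / 4 \<le> real (card (f x \<inter> U))})"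
    have "card U \<le> u" unfolding u_def using U(2) le_floor_iff_nat[of "\<delta> * real n / 16" "card U"] de by simp
    moreover have "{x\<in>{..<a}. \<alpha> * \<delta> * real n / 4 \<le> real (card (f x \<inter> U))} = {x\<in>{..<a}. k \<le> card (f x \<inter> U)}"
      unfolding k_def by (simp only: ceil_le_iff_nat)
    moreover have "m \<le> card {x\<in>{..<a}. \<alpha> * \<delta> * real n / 4 \<le> real (card (f x \<inter> U))}"
      unfolding m_def using c by (simp only: ceil_le_iff_nat)
    ultimately show "\<exists>U\<subseteq>{..<n}. card U \<le> u \<and> m \<le> card {x\<in>{..<a}. k \<le> card (f x \<inter> U)}"
      using U by auto
  qed
  have fO: "finite ?O" unfolding D_def by (intro finite_PiE) auto
  have fB2: "finite Bad2" unfolding Bad2_def using fO by simp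
  have "D \<noteq> {}"
  proof -
    obtain S where "S \<subseteq> {..<n}" "card S = d" using obtain_subset_with_card_n[of d "{..<n}"] dn by auto
    thus ?thesis unfolding D_def d_def by auto
  qed
  hence Opos: "0 < real (card ?O)" using fO by (simp add: card_gt_0_iff PiE_eq_empty_iff)
  have km: "8 * real n \<le> real (k * m)" unfolding k_def m_def using km_bound[OF al(1) de(1) an(1) n0 dmin] .
  have less1: "real (n + 1) * (2 ^ n * 2 ^ a * (3/4) ^ (k * m)) < 1"
  proof -
    have "n < 2 ^ n" by (rule less_exp)
    hence "Suc n \<le> 2 ^ n" by (rule Suc_leI)
    hence "n + 1 \<le> 2 ^ n" by simp
    hence r1: "real (n + 1) \<le> 2 ^ n" using of_nat_mono by fastforce
    have r2: "(2::real) ^ a \<le> 2 ^ n" using an by (intro power_increasing) auto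
    have "8 * n \<le> k * m" using km by linarith
    hence r3: "(3/4::real) ^ (k * m) \<le> (3/4) ^ (8 * n)" by (intro power_decreasing) auto
    have "real (n + 1) * (2 ^ n * 2 ^ a * (3/4) ^ (k * m)) \<le> 2 ^ n * (2 ^ n * 2 ^ n * (3/4) ^ (8 * n))"
      using r1 r2 r3 by (intro mult_mono) auto
    also have "\<dots> = (2 * (2 * (2 * (3/4) ^ 8))) ^ n"
    proof -
      have "(3/4::real) ^ (8 * n) = ((3/4) ^ 8) ^ n" by (rule power_mult)
      thus ?thesis by (simp only: power_mult_distrib mult.assoc)
    qed
    also have "\<dots> < 1"
    proof -
      have "0 \<le> (2 * (2 * (2 * (3/4) ^ 8)) :: real)" by simp
      moreover have "(2 * (2 * (2 * (3/4) ^ 8)) :: real) < 1" by (simp add: power_divide divide_less_eq)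
      ultimately show ?thesis using n0 power_less_one_iff by blast
    qed
    finally show ?thesis .
  qed
  have "real (card Bad) \<le> real (card Bad2)" using card_mono[OF fB2 sub] by simp
  also have "\<dots> \<le> 2 ^ n * 2 ^ a * (3/4) ^ (k * m) * real (card ?O)" using bc unfolding D_def d_def Bad2_def .
  finally have "real (card Bad) * real (n+1) \<le> (2 ^ n * 2 ^ a * (3/4) ^ (k * m) * real (card ?O)) * real (n+1)"
    by (rule mult_right_mono) simp
  also have "\<dots> = (real (n + 1) * (2 ^ n * 2 ^ a * (3/4) ^ (k * m))) * real (card ?O)" by (simp only: mult_ac)
  also have "\<dots> < 1 * real (card ?O)"
    using Opos less1 by (intro mult_strict_right_mono) auto
  finally show ?thesis unfolding Bad_def by simp
qed

lemma D_nonempty: "d \<le> n \<Longrightarrow> {S. S \<subseteq> {..<n} \<and> card S = d} \<noteq> {}"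
  using obtain_subset_with_card_n[of d "{..<n}"] by auto

lemma exists_f:
  fixes \<alpha> :: real and a n :: nat
  defines "D \<equiv> {S. S \<subseteq> {..<n} \<and> card S = nat \<lfloor>\<alpha> * real n\<rfloor>}"
  assumes al: "0 < \<alpha>" "\<alpha> \<le> 1/2" and an: "0 < a" "a < n"
  shows "\<exists>f\<in>PiE {..<a} (\<lambda>_. D). \<forall>\<delta>. 0 < \<delta> \<and> \<delta> \<le> 1 \<and> 10 * real a powr (-1/3) / \<alpha> \<le> \<delta> \<longrightarrow>
     (\<forall>U\<subseteq>{..<n}. real (card U) \<le> \<delta> * real n / 16 \<longrightarrow>
        real (card {x\<in>{..<a}. \<alpha> * \<delta> * real n / 4 \<le> real (card (f x \<inter> U))}) < \<alpha> * \<delta> * real a / 2)"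
proof -
  let ?O = "PiE {..<a} (\<lambda>_. D)"
  define dm where "dm = 10 * real a powr (-1/3) / \<alpha>"
  have n0: "0 < n" using an by simp
  have dm0: "0 < dm" unfolding dm_def using al an by simp
  have "real (nat \<lfloor>\<alpha> * real n\<rfloor>) \<le> \<alpha> * real n" using al by simp
  also have "\<alpha> * real n \<le> 1 * real n" using al by (intro mult_right_mono) auto
  finally have dn: "nat \<lfloor>\<alpha> * real n\<rfloor> \<le> n" by simp
  have Dne: "D \<noteq> {}" unfolding D_def by (rule D_nonempty[OF dn])
  have fO: "finite ?O" unfolding D_def by (intro finite_PiE) auto
  have Ope: "?O \<noteq> {}" using Dne by (simp add: PiE_eq_empty_iff)
  define Bad where "Bad = (\<lambda>\<delta>. {f\<in>?O. \<exists>U\<subseteq>{..<n}. real (card U) \<le> \<delta> * real n / 16 \<and>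
            \<alpha> * \<delta> * real a / 2 \<le> real (card {x\<in>{..<a}. \<alpha> * \<delta> * real n / 4 \<le> real (card (f x \<inter> U))})})"
  show ?thesis
  proof (cases "dm \<le> 1")
    case False
    then obtain f where "f \<in> ?O" using Ope by blast
    thus ?thesis using False unfolding dm_def by force
  next
    case True
    define du where "du = (\<lambda>u::nat. max (16 * real u / real n) dm)"
    define I where "I = {u. u \<le> n \<and> du u \<le> 1}"
    have I0: "0 \<in> I" unfolding I_def du_def using True dm0 by simp
    have fI: "finite I" unfolding I_def by simp
    have cI: "card I \<le> n + 1"
    proof -
      have "card I \<le> card {..n}" unfolding I_def by (intro card_mono) auto
      thus ?thesis by simp
    qed
    have bu: "real (card (Bad (du u))) * real (n + 1) < real (card ?O)" if "u \<in> I" for u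
    proof -
      have "0 < du u" "du u \<le> 1" "dm \<le> du u" using that dm0 unfolding I_def du_def by auto
      thus ?thesis unfolding Bad_def D_def using bad_real[OF al _ _ an, of "du u"] unfolding dm_def by simp
    qed
    have fBU: "finite (\<Union>u\<in>I. Bad (du u))" by (rule finite_subset[OF _ fO]) (auto simp: Bad_def)
    have "real (card (\<Union>u\<in>I. Bad (du u))) \<le> real (\<Sum>u\<in>I. card (Bad (du u)))"
      using card_UN_le[OF fI, of "\<lambda>u. Bad (du u)"] by (rule of_nat_mono)
    also have "\<dots> = (\<Sum>u\<in>I. real (card (Bad (du u))))" by simp
    also have "\<dots> < (\<Sum>u\<in>I. real (card ?O) / real (n + 1))"
    proof (rule sum_strict_mono[OF fI])
      show "I \<noteq> {}" using I0 by blast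
      fix u assume "u \<in> I"
      thus "real (card (Bad (du u))) < real (card ?O) / real (n + 1)"
        using bu by (simp add: less_divide_eq)
    qed
    also have "\<dots> = real (card I) * (real (card ?O) / real (n + 1))" by simp
    also have "\<dots> \<le> real (n + 1) * (real (card ?O) / real (n + 1))"
      using cI by (intro mult_right_mono) auto
    also have "\<dots> = real (card ?O)" by simp
    finally have "card (\<Union>u\<in>I. Bad (du u)) < card ?O" by simp
    hence "\<not> ?O \<subseteq> (\<Union>u\<in>I. Bad (du u))"
    proof (intro notI)
      assume "?O \<subseteq> (\<Union>u\<in>I. Bad (du u))"
      hence "card ?O \<le> card (\<Union>u\<in>I. Bad (du u))" by (rule card_mono[OF fBU])
      thus False using \<open>card (\<Union>u\<in>I. Bad (du u)) < card ?O\<close> by simp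
    qed
    then obtain f where f: "f \<in> ?O" "\<And>u. u \<in> I \<Longrightarrow> f \<notin> Bad (du u)" by blast
    show ?thesis
    proof (intro bexI[OF _ f(1)] allI impI)
      fix \<delta> U assume d: "0 < \<delta> \<and> \<delta> \<le> 1 \<and> 10 * real a powr (-1/3) / \<alpha> \<le> \<delta>"
        and U: "U \<subseteq> {..<n}" "real (card U) \<le> \<delta> * real n / 16"
      define u where "u = nat \<lfloor>\<delta> * real n / 16\<rfloor>"
      have dpos: "0 \<le> \<delta> * real n / 16" using d by simp
      have uR: "real u \<le> \<delta> * real n / 16" unfolding u_def using dpos by linarith
      have "\<delta> * real n / 16 \<le> real n" using d n0 by simp
      hence un: "u \<le> n" using uR by linarith
      have "16 * real u \<le> \<delta> * real n" using uR by linarith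
      hence "16 * real u / real n \<le> \<delta>" using n0 by (simp add: divide_le_eq)
      hence dud: "du u \<le> \<delta>" using d unfolding du_def dm_def by simp
      hence uI: "u \<in> I" unfolding I_def using un d by simp
      have "card U \<le> u" unfolding u_def using U(2) le_floor_iff_nat[OF dpos] by simp
      hence "real (card U) \<le> real u" by simp
      also have "real u \<le> du u * real n / 16"
      proof -
        have "16 * real u / real n \<le> du u" unfolding du_def by simp
        hence "16 * real u \<le> du u * real n" using n0 by (simp add: divide_le_eq)
        thus ?thesis by linarith
      qed
      finally have Uu: "real (card U) \<le> du u * real n / 16" .
      have nb: "f \<notin> Bad (du u)" using f(2) uI .
      have "\<not> (\<alpha> * du u * real a / 2 \<le> real (card {x\<in>{..<a}. \<alpha> * du u * real n / 4 \<le> real (card (f x \<inter> U))}))"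
        using nb U(1) Uu f(1) unfolding Bad_def by blast
      hence lt: "real (card {x\<in>{..<a}. \<alpha> * du u * real n / 4 \<le> real (card (f x \<inter> U))}) < \<alpha> * du u * real a / 2"
        by (simp only: not_le)
      have "{x\<in>{..<a}. \<alpha> * \<delta> * real n / 4 \<le> real (card (f x \<inter> U))} \<subseteq> {x\<in>{..<a}. \<alpha> * du u * real n / 4 \<le> real (card (f x \<inter> U))}"
      proof -
        have "\<alpha> * du u * real n / 4 \<le> \<alpha> * \<delta> * real n / 4"
          using dud al by (simp add: mult_left_mono mult_right_mono divide_right_mono)
        thus ?thesis by auto
      qed
      hence "card {x\<in>{..<a}. \<alpha> * \<delta> * real n / 4 \<le> real (card (f x \<inter> U))} \<le> card {x\<in>{..<a}. \<alpha> * du u * real n / 4 \<le> real (card (f x \<inter> U))}"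
        by (intro card_mono) auto
      hence "real (card {x\<in>{..<a}. \<alpha> * \<delta> * real n / 4 \<le> real (card (f x \<inter> U))}) < \<alpha> * du u * real a / 2"
        using lt by linarith
      also have "\<alpha> * du u * real a / 2 \<le> \<alpha> * \<delta> * real a / 2"
        using dud al by (simp add: mult_left_mono mult_right_mono divide_right_mono)
      finally show "real (card {x\<in>{..<a}. \<alpha> * \<delta> * real n / 4 \<le> real (card (f x \<inter> U))}) < \<alpha> * \<delta> * real a / 2" .
    qed
  qed
qed


lemma badj_sym: "badj F u v \<longleftrightarrow> badj F v u"
  unfolding badj_def by blast

lemma dist_refl: "u \<in> S \<Longrightarrow> dist_le_in F S k u u"
  unfolding dist_le_in_def by (intro exI[of _ "[u]"]) auto

lemma dist_edge: "u \<in> S \<Longrightarrow> v \<in> S \<Longrightarrow> badj F u v \<Longrightarrow> 1 \<le> k \<Longrightarrow> dist_le_in F S k u v"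
  unfolding dist_le_in_def
proof (intro exI[of _ "[u, v]"] conjI allI impI)
  fix i assume "u \<in> S" "v \<in> S" "badj F u v" "i + 1 < length [u, v]"
  thus "badj F ([u, v] ! i) ([u, v] ! (i + 1))" by simp
qed auto

lemma dist_mono: "dist_le_in F S k u v \<Longrightarrow> k \<le> l \<Longrightarrow> dist_le_in F S l u v"
  unfolding dist_le_in_def
  apply (elim exE)
  subgoal for p by (rule exI[of _ p]) auto
  done

lemma dist_sym: "dist_le_in F S k u v \<Longrightarrow> dist_le_in F S k v u"
proof -
  assume "dist_le_in F S k u v"
  then obtain p where p: "p \<noteq> []" "length p \<le> k + 1" "hd p = u" "last p = v" "set p \<subseteq> S"
    "\<And>i. i + 1 < length p \<Longrightarrow> badj F (p ! i) (p ! (i + 1))"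
    unfolding dist_le_in_def by blast
  show ?thesis unfolding dist_le_in_def
  proof (intro exI[of _ "rev p"] conjI allI impI)
    show "rev p \<noteq> []" "length (rev p) \<le> k + 1" "set (rev p) \<subseteq> S" using p by auto
    show "hd (rev p) = v" using p by (simp add: hd_rev)
    show "last (rev p) = u" using p by (simp add: last_rev)
    fix i assume i: "i + 1 < length (rev p)"
    define j where "j = length p - 2 - i"
    have j1: "j + 1 < length p" using i unfolding j_def by simp
    have e1: "rev p ! i = p ! (j + 1)" using i unfolding j_def by (simp add: rev_nth Suc_diff_Suc)
    have e2: "rev p ! (i + 1) = p ! j" using i unfolding j_def by (simp add: rev_nth)
    show "badj F (rev p ! i) (rev p ! (i + 1))" using p(6)[OF j1] e1 e2 badj_sym by metis
  qed
qed

lemma dist_trans: "dist_le_in F S k u v \<Longrightarrow> dist_le_in F S l v w \<Longrightarrow> dist_le_in F S (k + l) u w"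
proof -
  assume "dist_le_in F S k u v" "dist_le_in F S l v w"
  then obtain p q where p: "p \<noteq> []" "length p \<le> k + 1" "hd p = u" "last p = v" "set p \<subseteq> S"
    "\<And>i. i + 1 < length p \<Longrightarrow> badj F (p ! i) (p ! (i + 1))"
    and q: "q \<noteq> []" "length q \<le> l + 1" "hd q = v" "last q = w" "set q \<subseteq> S"
    "\<And>i. i + 1 < length q \<Longrightarrow> badj F (q ! i) (q ! (i + 1))"
    unfolding dist_le_in_def by blast
  obtain q' where q': "q = v # q'" using q(1) q(3) by (cases q) auto
  show ?thesis unfolding dist_le_in_def
  proof (intro exI[of _ "p @ q'"] conjI allI impI)
    show "p @ q' \<noteq> []" using p by simp
    show "length (p @ q') \<le> k + l + 1" using p q q' by simp
    show "hd (p @ q') = u" using p by simp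
    show "last (p @ q') = w" using p q q' by (cases "q' = []") auto
    show "set (p @ q') \<subseteq> S" using p q q' by auto
    fix i assume i: "i + 1 < length (p @ q')"
    show "badj F ((p @ q') ! i) ((p @ q') ! (i + 1))"
    proof (cases "i + 1 < length p")
      case True
      thus ?thesis using p(6)[OF True] by (simp add: nth_append)
    next
      case False
      define j where "j = i + 1 - length p"
      have j1: "j + 1 < length q" using i False q' unfolding j_def by simp
      have e1: "(p @ q') ! i = q ! j"
      proof (cases "i + 1 = length p")
        case True
        have "i = length p - 1" using True by simp
        hence "(p @ q') ! i = p ! (length p - 1)" using True by (simp add: nth_append)
        also have "\<dots> = last p" using p(1) by (simp add: last_conv_nth)
        finally have "(p @ q') ! i = last p" .
        thus ?thesis using True p(4) q' unfolding j_def by simp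
      next
        case F2: False
        hence "length p \<le> i" using False by simp
        thus ?thesis using q' unfolding j_def by (simp add: nth_append)
      qed
      have e2: "(p @ q') ! (i + 1) = q ! (j + 1)"
        using False q' unfolding j_def by (simp add: nth_append)
      show ?thesis using q(6)[OF j1] e1 e2 by simp
    qed
  qed
qed


lemma card_row_sum:
  fixes a n :: nat and F :: "(nat \<times> nat) set"
  assumes "F \<subseteq> {..<a} \<times> {..<n}"
  shows "card F = (\<Sum>x<a. card {y. (x, y) \<in> F})"
proof -
  have "F = Sigma {..<a} (\<lambda>x. {y. (x, y) \<in> F})" using assms by auto
  hence "card F = card (Sigma {..<a} (\<lambda>x. {y. (x, y) \<in> F}))" by (rule arg_cong)
  also have "\<dots> = (\<Sum>x<a. card {y. (x, y) \<in> F})"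
  proof (rule card_SigmaI)
    show "finite {..<a}" by simp
    show "\<forall>x\<in>{..<a}. finite {y. (x, y) \<in> F}"
    proof
      fix x have "{y. (x, y) \<in> F} \<subseteq> {..<n}" using assms by auto
      thus "finite {y. (x, y) \<in> F}" using finite_subset by blast
    qed
  qed
  finally show ?thesis .
qed

lemma double_count:
  fixes a n :: nat and F :: "(nat \<times> nat) set"
  assumes "F \<subseteq> {..<a} \<times> {..<n}" "A1 \<subseteq> {..<a}"
  shows "(\<Sum>x\<in>A1. card {y. (x, y) \<in> F}) = (\<Sum>y<n. card {x\<in>A1. (x, y) \<in> F})"
proof -
  have fA: "finite A1" using assms(2) finite_subset by blast
  have r: "card {y. (x, y) \<in> F} = (\<Sum>y<n. if (x, y) \<in> F then 1 else 0)" if "x \<in> A1" for x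
  proof -
    have "{y. (x, y) \<in> F} = {y\<in>{..<n}. (x, y) \<in> F}" using assms by auto
    also have "card {y\<in>{..<n}. (x, y) \<in> F} = (\<Sum>y<n. if (x, y) \<in> F then 1 else 0)"
      unfolding card_eq_sum by (rule sum.inter_filter) simp
    finally show ?thesis .
  qed
  have c: "card {x\<in>A1. (x, y) \<in> F} = (\<Sum>x\<in>A1. if (x, y) \<in> F then 1 else 0)" for y
    unfolding card_eq_sum by (rule sum.inter_filter[OF fA])
  have "(\<Sum>x\<in>A1. card {y. (x, y) \<in> F}) = (\<Sum>x\<in>A1. \<Sum>y<n. if (x, y) \<in> F then 1 else 0)"
    using r by (rule sum.cong[OF refl])
  also have "\<dots> = (\<Sum>y<n. \<Sum>x\<in>A1. if (x, y) \<in> F then 1 else 0)"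
    by (rule sum.swap[of "\<lambda>x y. if (x, y) \<in> F then (1::nat) else 0" "{..<n}" A1])
  also have "\<dots> = (\<Sum>y<n. card {x\<in>A1. (x, y) \<in> F})" by (rule sum.cong[OF refl c[symmetric]])
  finally show ?thesis .
qed



lemma greedy:
  fixes \<alpha> \<delta> :: real and a n :: nat and E F :: "(nat \<times> nat) set" and X :: "nat set"
  assumes E: "E \<subseteq> {..<a} \<times> {..<n}" and FE: "F \<subseteq> E"
    and Q: "\<forall>U\<subseteq>{..<n}. real (card U) \<le> \<delta> * real n / 16 \<longrightarrow>
        real (card {x\<in>{..<a}. \<alpha> * \<delta> * real n / 4 \<le> real (card ({y. (x, y) \<in> E} \<inter> U))}) < \<alpha> * \<delta> * real a / 2"
    and X: "X \<subseteq> {..<a}" "\<alpha> * \<delta> * real a / 2 \<le> real (card X)"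
    and XF: "\<And>x. x \<in> X \<Longrightarrow> \<alpha> * \<delta> * real n / 2 \<le> real (card {y. (x, y) \<in> F})"
  shows "\<exists>A'\<subseteq>X. card A' \<le> j \<and> (\<delta> * real n / 16 \<le> real (card (\<Union>x\<in>A'. {y. (x, y) \<in> F}))
           \<or> real j * (\<alpha> * \<delta> * real n / 4) \<le> real (card (\<Union>x\<in>A'. {y. (x, y) \<in> F})))"
proof (induction j)
  case 0
  show ?case by (intro exI[of _ "{}"]) simp
next
  case (Suc j)
  then obtain A' where A': "A' \<subseteq> X" "card A' \<le> j" and
    D: "\<delta> * real n / 16 \<le> real (card (\<Union>x\<in>A'. {y. (x, y) \<in> F}))
           \<or> real j * (\<alpha> * \<delta> * real n / 4) \<le> real (card (\<Union>x\<in>A'. {y. (x, y) \<in> F}))" by blast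
  define U where "U = (\<Union>x\<in>A'. {y. (x, y) \<in> F})"
  have fX: "finite X" using X(1) finite_subset by blast
  have fA': "finite A'" using A'(1) fX finite_subset by blast
  have NFsub: "{y. (x, y) \<in> F} \<subseteq> {..<n}" for x using FE E by auto
  have NFfin: "finite {y. (x, y) \<in> F}" for x using NFsub finite_subset by blast
  have Usub: "U \<subseteq> {..<n}" unfolding U_def using NFsub by blast
  have fU: "finite U" using Usub finite_subset by blast
  show ?case
  proof (cases "\<delta> * real n / 16 \<le> real (card U)")
    case True
    thus ?thesis using A' unfolding U_def by (intro exI[of _ A']) auto
  next
    case False
    hence Dj: "real j * (\<alpha> * \<delta> * real n / 4) \<le> real (card U)" using D unfolding U_def by simp
    let ?bad = "{x\<in>{..<a}. \<alpha> * \<delta> * real n / 4 \<le> real (card ({y. (x, y) \<in> E} \<inter> U))}"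
    have lt: "real (card ?bad) < \<alpha> * \<delta> * real a / 2" using Q Usub False by simp
    have "\<not> X \<subseteq> ?bad"
    proof
      assume "X \<subseteq> ?bad"
      hence "card X \<le> card ?bad" by (intro card_mono) auto
      thus False using lt X(2) by linarith
    qed
    then obtain x where x: "x \<in> X" "x \<notin> ?bad" by blast
    have xa: "x < a" using x X by auto
    have small: "real (card ({y. (x, y) \<in> E} \<inter> U)) < \<alpha> * \<delta> * real n / 4" using x(2) xa by simp
    have "{y. (x, y) \<in> F} \<inter> U \<subseteq> {y. (x, y) \<in> E} \<inter> U" using FE by auto
    hence "card ({y. (x, y) \<in> F} \<inter> U) \<le> card ({y. (x, y) \<in> E} \<inter> U)"
      by (intro card_mono) (use fU in auto)
    hence small2: "real (card ({y. (x, y) \<in> F} \<inter> U)) < \<alpha> * \<delta> * real n / 4" using small by linarith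
    have big: "\<alpha> * \<delta> * real n / 2 \<le> real (card {y. (x, y) \<in> F})" using XF x(1) .
    have cd: "card ({y. (x, y) \<in> F} - U) = card {y. (x, y) \<in> F} - card ({y. (x, y) \<in> F} \<inter> U)"
      by (rule card_Diff_subset_Int) (use fU in auto)
    have cle: "card ({y. (x, y) \<in> F} \<inter> U) \<le> card {y. (x, y) \<in> F}" by (intro card_mono NFfin) auto
    have new: "\<alpha> * \<delta> * real n / 4 \<le> real (card ({y. (x, y) \<in> F} - U))"
      using cd cle big small2 by (simp add: of_nat_diff)
    have un: "(\<Union>x\<in>insert x A'. {y. (x, y) \<in> F}) = U \<union> ({y. (x, y) \<in> F} - U)"
      unfolding U_def by auto
    have "card (U \<union> ({y. (x, y) \<in> F} - U)) = card U + card ({y. (x, y) \<in> F} - U)"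
      by (rule card_Un_disjoint) (use fU NFfin in auto)
    hence "real (Suc j) * (\<alpha> * \<delta> * real n / 4) \<le> real (card (\<Union>x\<in>insert x A'. {y. (x, y) \<in> F}))"
      using un Dj new by (simp add: algebra_simps)
    moreover have "insert x A' \<subseteq> X" using x A' by auto
    moreover have "card (insert x A') \<le> Suc j" using A' fA' card_insert_le_m1 by (simp add: card_insert_if)
    ultimately show ?thesis by blast
  qed
qed



lemma det:
  fixes \<alpha> \<delta> :: real and a n :: nat and E F :: "(nat \<times> nat) set"
  assumes al: "0 < \<alpha>" "\<alpha> \<le> 1/2" and de: "0 < \<delta>" and n0: "0 < n"
    and E: "E \<subseteq> {..<a} \<times> {..<n}" and FE: "F \<subseteq> E"
    and Q: "\<forall>U\<subseteq>{..<n}. real (card U) \<le> \<delta> * real n / 16 \<longrightarrow>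
        real (card {x\<in>{..<a}. \<alpha> * \<delta> * real n / 4 \<le> real (card ({y. (x, y) \<in> E} \<inter> U))}) < \<alpha> * \<delta> * real a / 2"
    and Fc: "\<alpha> * \<delta> * real a * real n \<le> real (card F)"
  shows "\<exists>A' B'. A' \<subseteq> {..<a} \<and> B' \<subseteq> {..<n} \<and> real (card A') \<le> 1 / \<alpha> \<and>
           real (card B') \<ge> \<delta> * real n / 16 \<and> induced_diam_le F A' B' 6"
proof -
  define NF where "NF = (\<lambda>x. {y. (x, y) \<in> F})"
  have FAB: "F \<subseteq> {..<a} \<times> {..<n}" using E FE by blast
  define A1 where "A1 = {x\<in>{..<a}. \<alpha> * \<delta> * real n / 2 \<le> real (card (NF x))}"
  have A1s: "A1 \<subseteq> {..<a}" unfolding A1_def by auto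
  have fa: "finite {..<a}" by simp
  have "real (card F) = (\<Sum>x<a. real (card (NF x)))"
    using card_row_sum[OF FAB] unfolding NF_def by simp
  also have "\<dots> = (\<Sum>x\<in>A1. real (card (NF x))) + (\<Sum>x\<in>{..<a} - A1. real (card (NF x)))"
    using sum.subset_diff[OF A1s fa, of "\<lambda>x. real (card (NF x))"] by (simp add: add.commute)
  also have "(\<Sum>x\<in>{..<a} - A1. real (card (NF x))) \<le> (\<Sum>x\<in>{..<a} - A1. \<alpha> * \<delta> * real n / 2)"
    by (intro sum_mono) (auto simp: A1_def)
  also have "\<dots> = real (card ({..<a} - A1)) * (\<alpha> * \<delta> * real n / 2)" by simp
  also have "\<dots> \<le> real a * (\<alpha> * \<delta> * real n / 2)"
  proof -
    have "card ({..<a} - A1) \<le> a" using card_mono[OF fa, of "{..<a} - A1"] by auto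
    thus ?thesis using al de by (intro mult_right_mono) auto
  qed
  finally have "real (card F) \<le> (\<Sum>x\<in>A1. real (card (NF x))) + real a * (\<alpha> * \<delta> * real n / 2)" by simp
  moreover have "real a * (\<alpha> * \<delta> * real n / 2) = \<alpha> * \<delta> * real a * real n / 2" by (simp add: algebra_simps)
  ultimately have s1: "\<alpha> * \<delta> * real a * real n / 2 \<le> (\<Sum>x\<in>A1. real (card (NF x)))" using Fc by linarith
  have "(\<Sum>x\<in>A1. card (NF x)) = (\<Sum>y<n. card {x\<in>A1. (x, y) \<in> F})"
    unfolding NF_def by (rule double_count[OF FAB A1s])
  hence s2: "(\<Sum>x\<in>A1. real (card (NF x))) = (\<Sum>y<n. real (card {x\<in>A1. (x, y) \<in> F}))"
    by (metis (no_types) of_nat_sum)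
  obtain y where y: "y < n" "\<alpha> * \<delta> * real a / 2 \<le> real (card {x\<in>A1. (x, y) \<in> F})"
  proof (rule ccontr)
    assume "\<not> thesis"
    hence all: "\<And>y. y < n \<Longrightarrow> real (card {x\<in>A1. (x, y) \<in> F}) < \<alpha> * \<delta> * real a / 2"
      using that by (meson not_le)
    have "(\<Sum>y<n. real (card {x\<in>A1. (x, y) \<in> F})) < (\<Sum>y<n. \<alpha> * \<delta> * real a / 2)"
      using all n0 by (intro sum_strict_mono) auto
    also have "\<dots> = \<alpha> * \<delta> * real a * real n / 2" by simp
    finally show False using s1 s2 by simp
  qed
  define X where "X = {x\<in>A1. (x, y) \<in> F}"
  have Xs: "X \<subseteq> {..<a}" unfolding X_def using A1s by auto
  have XF: "\<And>x. x \<in> X \<Longrightarrow> \<alpha> * \<delta> * real n / 2 \<le> real (card {y. (x, y) \<in> F})"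
    unfolding X_def A1_def NF_def by auto
  define K where "K = nat \<lfloor>1 / \<alpha>\<rfloor>"
  obtain A' where A': "A' \<subseteq> X" "card A' \<le> K"
    and D: "\<delta> * real n / 16 \<le> real (card (\<Union>x\<in>A'. {y. (x, y) \<in> F}))
           \<or> real K * (\<alpha> * \<delta> * real n / 4) \<le> real (card (\<Union>x\<in>A'. {y. (x, y) \<in> F}))"
    using greedy[OF E FE Q Xs _ XF, of K] y(2) unfolding X_def by blast
  define U where "U = (\<Union>x\<in>A'. {y. (x, y) \<in> F})"
  have KR: "real K \<le> 1 / \<alpha>" unfolding K_def using al by simp
  have Ka: "1 / 4 \<le> real K * \<alpha>"
  proof -
    have "1 / \<alpha> - 1 \<le> real K" unfolding K_def using al by linarith
    hence "(1 / \<alpha> - 1) * \<alpha> \<le> real K * \<alpha>" using al by (intro mult_right_mono) auto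
    moreover have "(1 / \<alpha> - 1) * \<alpha> = 1 - \<alpha>" using al by (simp add: algebra_simps)
    ultimately show ?thesis using al by simp
  qed
  have Ubig: "\<delta> * real n / 16 \<le> real (card U)"
  proof -
    have "\<delta> * real n / 16 = (1/4) * (\<delta> * real n / 4)" by simp
    also have "\<dots> \<le> (real K * \<alpha>) * (\<delta> * real n / 4)" using Ka de n0 by (intro mult_right_mono) auto
    also have "\<dots> = real K * (\<alpha> * \<delta> * real n / 4)" by simp
    finally show ?thesis using D unfolding U_def by linarith
  qed
  define B' where "B' = insert y U"
  have NFsub: "{y. (x, y) \<in> F} \<subseteq> {..<n}" for x using FAB by auto
  have Usub: "U \<subseteq> {..<n}" unfolding U_def using NFsub by blast
  have fU: "finite U" using Usub finite_subset by blast
  have B's: "B' \<subseteq> {..<n}" unfolding B'_def using Usub y(1) by simp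
  have "card U \<le> card B'" unfolding B'_def using fU by (simp add: card_insert_le)
  hence B'c: "\<delta> * real n / 16 \<le> real (card B')" using Ubig by linarith
  have A's: "A' \<subseteq> {..<a}" using A'(1) Xs by blast
  have A'c: "real (card A') \<le> 1 / \<alpha>" using A'(2) KR by linarith
  define S where "S = Inl ` A' \<union> Inr ` B'"
  have yS: "Inr y \<in> S" unfolding S_def B'_def by simp
  have toy: "dist_le_in F S 2 s (Inr y)" if "s \<in> S" for s
  proof -
    from that consider (l) x where "x \<in> A'" "s = Inl x" | (r) b where "b \<in> B'" "s = Inr b"
      unfolding S_def by blast
    thus ?thesis
    proof cases
      case l
      have "(x, y) \<in> F" using l A'(1) unfolding X_def by auto
      hence "badj F (Inl x) (Inr y)" unfolding badj_def by blast
      thus ?thesis using l yS that by (intro dist_edge) auto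
    next
      case r
      show ?thesis
      proof (cases "b = y")
        case True thus ?thesis using r yS dist_refl by simp
      next
        case False
        hence "b \<in> U" using r unfolding B'_def by simp
        then obtain x where x: "x \<in> A'" "(x, b) \<in> F" unfolding U_def by blast
        have xy: "(x, y) \<in> F" using x A'(1) unfolding X_def by auto
        have xS: "Inl x \<in> S" using x unfolding S_def by simp
        have "badj F (Inr b) (Inl x)" using x unfolding badj_def by blast
        hence d1: "dist_le_in F S 1 (Inr b) (Inl x)" using r that xS by (intro dist_edge) auto
        have "badj F (Inl x) (Inr y)" using xy unfolding badj_def by blast
        hence d2: "dist_le_in F S 1 (Inl x) (Inr y)" using xS yS by (intro dist_edge) auto
        have "dist_le_in F S (1 + 1) (Inr b) (Inr y)" by (rule dist_trans[OF d1 d2])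
        thus ?thesis using r(2) by (simp add: numeral_2_eq_2)
      qed
    qed
  qed
  have "induced_diam_le F A' B' 6"
    unfolding induced_diam_le_def Let_def S_def[symmetric]
  proof (intro conjI ballI)
    show "S \<noteq> {}" using yS by blast
    fix u v assume "u \<in> S" "v \<in> S"
    have "dist_le_in F S (2 + 2) u v" using dist_trans[OF toy[OF \<open>u \<in> S\<close>] dist_sym[OF toy[OF \<open>v \<in> S\<close>]]] .
    thus "dist_le_in F S 6 u v" by (rule dist_mono) simp
  qed
  thus ?thesis using A's B's A'c B'c by blast
qed



theorem lemma4:
  fixes \<alpha> :: real and a n :: nat
  assumes "0 < \<alpha>" "\<alpha> \<le> 1/2" "0 < a" "0 < n"
    and "real n \<ge> 1000 * (ln (real a) + 1) / \<alpha>" "n \<ge> a + 1"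
  shows "\<exists>E :: (nat \<times> nat) set. E \<subseteq> {..<a} \<times> {..<n} \<and>
    (\<forall>x<a. card {y. (x, y) \<in> E} = nat \<lfloor>\<alpha> * real n\<rfloor>) \<and>
    (\<forall>\<delta>::real. 0 < \<delta> \<and> \<delta> \<le> 1 \<and> \<delta> \<ge> 10 * real a powr (-1/3) / \<alpha> \<longrightarrow>
      (\<forall>F. F \<subseteq> E \<and> real (card F) \<ge> \<alpha> * \<delta> * real a * real n \<longrightarrow>
        (\<exists>A' B'. A' \<subseteq> {..<a} \<and> B' \<subseteq> {..<n} \<and> real (card A') \<le> 1 / \<alpha> \<and>
           real (card B') \<ge> \<delta> * real n / 16 \<and> induced_diam_le F A' B' 6)))"
proof -
  have an: "a < n" using assms by simp
  obtain f where f: "f \<in> PiE {..<a} (\<lambda>_. {S. S \<subseteq> {..<n} \<and> card S = nat \<lfloor>\<alpha> * real n\<rfloor>})"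
    and fQ: "\<forall>\<delta>. 0 < \<delta> \<and> \<delta> \<le> 1 \<and> 10 * real a powr (-1/3) / \<alpha> \<le> \<delta> \<longrightarrow>
     (\<forall>U\<subseteq>{..<n}. real (card U) \<le> \<delta> * real n / 16 \<longrightarrow>
        real (card {x\<in>{..<a}. \<alpha> * \<delta> * real n / 4 \<le> real (card (f x \<inter> U))}) < \<alpha> * \<delta> * real a / 2)"
    using exists_f[OF assms(1,2,3) an] by blast
  define E where "E = {(x, y). x < a \<and> y \<in> f x}"
  have fx: "f x \<subseteq> {..<n}" "card (f x) = nat \<lfloor>\<alpha> * real n\<rfloor>" if "x < a" for x
    using f that by (auto simp: PiE_iff)
  have row: "{y. (x, y) \<in> E} = f x" if "x < a" for x using that unfolding E_def by auto
  have Esub: "E \<subseteq> {..<a} \<times> {..<n}" unfolding E_def using fx by auto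
  show ?thesis
  proof (intro exI[of _ E] conjI allI impI)
    show "E \<subseteq> {..<a} \<times> {..<n}" by (rule Esub)
    fix x assume "x < a"
    thus "card {y. (x, y) \<in> E} = nat \<lfloor>\<alpha> * real n\<rfloor>" using row fx by simp
  next
    fix \<delta> :: real and F
    assume d: "0 < \<delta> \<and> \<delta> \<le> 1 \<and> 10 * real a powr (-1/3) / \<alpha> \<le> \<delta>"
      and F: "F \<subseteq> E \<and> \<alpha> * \<delta> * real a * real n \<le> real (card F)"
    have Q: "\<forall>U\<subseteq>{..<n}. real (card U) \<le> \<delta> * real n / 16 \<longrightarrow>
        real (card {x\<in>{..<a}. \<alpha> * \<delta> * real n / 4 \<le> real (card ({y. (x, y) \<in> E} \<inter> U))}) < \<alpha> * \<delta> * real a / 2"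
    proof (intro allI impI)
      fix U assume U: "U \<subseteq> {..<n}" "real (card U) \<le> \<delta> * real n / 16"
      have "{x\<in>{..<a}. \<alpha> * \<delta> * real n / 4 \<le> real (card ({y. (x, y) \<in> E} \<inter> U))}
          = {x\<in>{..<a}. \<alpha> * \<delta> * real n / 4 \<le> real (card (f x \<inter> U))}"
        using row by auto
      thus "real (card {x\<in>{..<a}. \<alpha> * \<delta> * real n / 4 \<le> real (card ({y. (x, y) \<in> E} \<inter> U))}) < \<alpha> * \<delta> * real a / 2"
        using fQ d U by simp
    qed
    show "\<exists>A' B'. A' \<subseteq> {..<a} \<and> B' \<subseteq> {..<n} \<and> real (card A') \<le> 1 / \<alpha> \<and>
           real (card B') \<ge> \<delta> * real n / 16 \<and> induced_diam_le F A' B' 6"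
      using det[OF assms(1,2) _ assms(4) Esub _ Q] d F by blast
  qed
qed


end
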